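(* Let $F$ be a finite-precision CDF and $S$ a finite-precision survival function over a binary number format $\mathcal{B}=(n,\gamma_{\mathcal{B}},\phi_{\mathcal{B}})$, with values in $\mathbb{F}^E_m\cap[0,1]$. Let $b^*:=\min_{<_{\mathcal{B}}}\{b\in\{0,1\}^n:F(b)\ge\mathrm{succ}(1/2)\}$ with $\mathrm{succ}(1/2)$ the smallest element of $\mathbb{F}^E_m$ greater than $1/2$, suppose $S(b^* )<1/2$, and define $G(b):=(0,F(b))$ if $b<_{\mathcal{B}}b^*$ and $G(b):=(1,S(b))$ if $b\ge_{\mathcal{B}}b^*$; let $G^*(b):=(1-d)f+d(1-f)$ for $(d,f)=G(b)$. Then: (i) there is a random variable $X$ with values in $\overline{\mathbb{R}}_{\mathcal{B}}:=\gamma_{\mathcal{B}}(\{0,1\}^n)$ such that $\Pr(X\le t)=(1-d)f+d(1-f)$ for every $t\in\overline{\mathbb{R}}_{\mathcal{B}}$, where $(d,f)=G(r(t))$ and $r(t):=\max_{<_{\mathcal{B}}}\{b\in\{0,1\}^n:\gamma_{\mathcal{B}}(b)\le t\}$; (ii) the image of $G$ is contained in $\{(0,f):0\le f\le1/2\}\cup\{(1,f):0\le f<1/2\}$; (iii) for all $b,b'\in\{0,1\}^n$, if the first component of $G(b)$ is less than the first component of $G(b')$, then $G^*(b)<G^*(b')$.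
   Context: $\overline{\mathbb{R}}=\mathbb{R}\cup\{-\infty,+\infty,\bot\}$ is totally ordered by $-\infty<$ reals $<+\infty<\bot$, with $\le$ the corresponding weak order. A binary number format $\mathcal{B}=(n,\gamma_{\mathcal{B}},\phi_{\mathcal{B}})$ consists of $n\ge1$, $\gamma_{\mathcal{B}}:\{0,1\}^n\to\overline{\mathbb{R}}$, and a bijection $\phi_{\mathcal{B}}$ of $\{0,1\}^n$ with $b<_{\mathrm{dict}}b'\Rightarrow\gamma_{\mathcal{B}}(\phi_{\mathcal{B}}(b))\le\gamma_{\mathcal{B}}(\phi_{\mathcal{B}}(b'))$; it induces the linear order $b<_{\mathcal{B}}b'$ iff $\phi_{\mathcal{B}}^{-1}(b)<_{\mathrm{dict}}\phi_{\mathcal{B}}^{-1}(b')$. $\mathbb{F}^E_m$ is the set of floating-point numbers with $E$ exponent and $m$ mantissa bits. A finite-precision CDF over $\mathcal{B}$ is $F:\{0,1\}^n\to\mathbb{F}^E_m\cap[0,1]$ with $F(\phi_{\mathcal{B}}(1^n))=1$ and $b<_{\mathcal{B}}b'\Rightarrow F(b)\le F(b')$. A finite-precision survival function over $\mathcal{B}$ is $S:\{0,1\}^n\to\mathbb{F}^E_m\cap[0,1]$ with $S(\phi_{\mathcal{B}}(1^n))=0$ and $b<_{\mathcal{B}}b'\Rightarrow S(b')\le S(b)$. *)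

theory Defs
  imports "HOL-Probability.Probability"
begin

text \<open>The totally ordered set R-bar = R with -inf, +inf and bot, ordered
  -inf < reals < +inf < bot.\<close>

datatype xreal = MInf | Fin real | PInf | Undef

fun xkey :: "xreal \<Rightarrow> nat \<times> real" where
  "xkey MInf = (0, 0)"
| "xkey (Fin x) = (1, x)"
| "xkey PInf = (2, 0)"
| "xkey Undef = (3, 0)"

lemma xkey_inj: "xkey a = xkey b \<Longrightarrow> a = b"
  by (cases a; cases b; auto)

instantiation xreal :: linorder
begin
definition less_eq_xreal :: "xreal \<Rightarrow> xreal \<Rightarrow> bool" where
  "less_eq_xreal a b \<longleftrightarrow> fst (xkey a) < fst (xkey b)
     \<or> (fst (xkey a) = fst (xkey b) \<and> snd (xkey a) \<le> snd (xkey b))"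
definition less_xreal :: "xreal \<Rightarrow> xreal \<Rightarrow> bool" where
  "less_xreal a b \<longleftrightarrow> a \<le> b \<and> \<not> b \<le> a"
instance
proof
  fix x y z :: xreal
  show "(x < y) = (x \<le> y \<and> \<not> y \<le> x)" by (simp add: less_xreal_def)
  show "x \<le> x" by (simp add: less_eq_xreal_def)
  show "x \<le> y \<Longrightarrow> y \<le> z \<Longrightarrow> x \<le> z" by (auto simp: less_eq_xreal_def)
  show "x \<le> y \<Longrightarrow> y \<le> x \<Longrightarrow> x = y"
    by (rule xkey_inj) (auto simp: less_eq_xreal_def prod_eq_iff)
  show "x \<le> y \<or> y \<le> x" by (auto simp: less_eq_xreal_def)
qed
end

definition bits :: "nat \<Rightarrow> bool list set" where
  "bits n = {b. length b = n}"

definition dict_less :: "bool list \<Rightarrow> bool list \<Rightarrow> bool" where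
  "dict_less b b' \<longleftrightarrow> (b, b') \<in> lex {(False, True)}"

definition binary_number_format ::
  "nat \<Rightarrow> (bool list \<Rightarrow> xreal) \<Rightarrow> (bool list \<Rightarrow> bool list) \<Rightarrow> bool" where
  "binary_number_format n \<gamma> \<phi> \<longleftrightarrow> n \<ge> 1 \<and> bij_betw \<phi> (bits n) (bits n)
     \<and> (\<forall>b\<in>bits n. \<forall>b'\<in>bits n. dict_less b b' \<longrightarrow> \<gamma> (\<phi> b) \<le> \<gamma> (\<phi> b'))"

definition fmt_less :: "nat \<Rightarrow> (bool list \<Rightarrow> bool list) \<Rightarrow> bool list \<Rightarrow> bool list \<Rightarrow> bool" where
  "fmt_less n \<phi> b b' \<longleftrightarrow> dict_less (inv_into (bits n) \<phi> b) (inv_into (bits n) \<phi> b')"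

definition fmt_min :: "nat \<Rightarrow> (bool list \<Rightarrow> bool list) \<Rightarrow> (bool list \<Rightarrow> bool) \<Rightarrow> bool list" where
  "fmt_min n \<phi> P = (THE b. b \<in> bits n \<and> P b \<and> (\<forall>b'\<in>bits n. P b' \<longrightarrow> \<not> fmt_less n \<phi> b' b))"

definition fmt_max :: "nat \<Rightarrow> (bool list \<Rightarrow> bool list) \<Rightarrow> (bool list \<Rightarrow> bool) \<Rightarrow> bool list" where
  "fmt_max n \<phi> P = (THE b. b \<in> bits n \<and> P b \<and> (\<forall>b'\<in>bits n. P b' \<longrightarrow> \<not> fmt_less n \<phi> b b'))"

text \<open>The finite (real) values of the IEEE-754-style binary floating-point format with
  E exponent bits and m mantissa bits: bias = 2^(E-1) - 1; subnormals (incl. zero)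
  +-(k/2^m) * 2^(1-bias) and normals +-(1 + k/2^m) * 2^(e-bias), 1 <= e <= 2^E - 2,
  k < 2^m.  (Infinities and NaN are not reals and play no role in F^E_m intersected [0,1].)\<close>
definition fp_bias :: "nat \<Rightarrow> int" where
  "fp_bias E = 2 ^ (E - 1) - 1"

definition fp_set :: "nat \<Rightarrow> nat \<Rightarrow> real set" where
  "fp_set E m =
     {s * (real k / 2 ^ m) * 2 powi (1 - fp_bias E) | s k. s \<in> {-1, 1} \<and> k < 2 ^ m}
   \<union> {s * (1 + real k / 2 ^ m) * 2 powi (int e - fp_bias E) | s k e.
        s \<in> {-1, 1} \<and> k < 2 ^ m \<and> 1 \<le> e \<and> e \<le> 2 ^ E - 2}"

definition fp_succ :: "nat \<Rightarrow> nat \<Rightarrow> real \<Rightarrow> real" where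
  "fp_succ E m x = Min {y \<in> fp_set E m. y > x}"

definition fp_cdf ::
  "nat \<Rightarrow> nat \<Rightarrow> nat \<Rightarrow> (bool list \<Rightarrow> bool list) \<Rightarrow> (bool list \<Rightarrow> real) \<Rightarrow> bool" where
  "fp_cdf E m n \<phi> F \<longleftrightarrow>
     (\<forall>b\<in>bits n. F b \<in> fp_set E m \<and> 0 \<le> F b \<and> F b \<le> 1)
   \<and> F (\<phi> (replicate n True)) = 1
   \<and> (\<forall>b\<in>bits n. \<forall>b'\<in>bits n. fmt_less n \<phi> b b' \<longrightarrow> F b \<le> F b')"

definition fp_survival ::
  "nat \<Rightarrow> nat \<Rightarrow> nat \<Rightarrow> (bool list \<Rightarrow> bool list) \<Rightarrow> (bool list \<Rightarrow> real) \<Rightarrow> bool" where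
  "fp_survival E m n \<phi> S \<longleftrightarrow>
     (\<forall>b\<in>bits n. S b \<in> fp_set E m \<and> 0 \<le> S b \<and> S b \<le> 1)
   \<and> S (\<phi> (replicate n True)) = 0
   \<and> (\<forall>b\<in>bits n. \<forall>b'\<in>bits n. fmt_less n \<phi> b b' \<longrightarrow> S b' \<le> S b)"

definition bstar ::
  "nat \<Rightarrow> nat \<Rightarrow> nat \<Rightarrow> (bool list \<Rightarrow> bool list) \<Rightarrow> (bool list \<Rightarrow> real) \<Rightarrow> bool list" where
  "bstar E m n \<phi> F = fmt_min n \<phi> (\<lambda>b. F b \<ge> fp_succ E m (1/2))"

definition Gfun ::
  "nat \<Rightarrow> nat \<Rightarrow> nat \<Rightarrow> (bool list \<Rightarrow> bool list) \<Rightarrow> (bool list \<Rightarrow> real) \<Rightarrow> (bool list \<Rightarrow> real)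
     \<Rightarrow> bool list \<Rightarrow> real \<times> real" where
  "Gfun E m n \<phi> F S b =
     (if fmt_less n \<phi> b (bstar E m n \<phi> F) then (0, F b) else (1, S b))"

definition Gstar ::
  "nat \<Rightarrow> nat \<Rightarrow> nat \<Rightarrow> (bool list \<Rightarrow> bool list) \<Rightarrow> (bool list \<Rightarrow> real) \<Rightarrow> (bool list \<Rightarrow> real)
     \<Rightarrow> bool list \<Rightarrow> real" where
  "Gstar E m n \<phi> F S b =
     (let (d, f) = Gfun E m n \<phi> F S b in (1 - d) * f + d * (1 - f))"

definition rfun :: "nat \<Rightarrow> (bool list \<Rightarrow> xreal) \<Rightarrow> (bool list \<Rightarrow> bool list) \<Rightarrow> xreal \<Rightarrow> bool list" where
  "rfun n \<gamma> \<phi> t = fmt_max n \<phi> (\<lambda>b. \<gamma> b \<le> t)"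

end

theory Submission imports Defs "HOL-Library.List_Lexorder" begin

lemma weights_exist:
  fixes H :: "'a::linorder \<Rightarrow> real"
  assumes "finite A" "A \<subseteq> T"
    and mono: "\<And>s t. s \<in> T \<Longrightarrow> t \<in> T \<Longrightarrow> s \<le> t \<Longrightarrow> H s \<le> H t"
    and nonneg: "\<And>t. t \<in> T \<Longrightarrow> 0 \<le> H t"
  shows "\<exists>w. (\<forall>x. 0 \<le> w x) \<and> (\<forall>x. x \<notin> A \<longrightarrow> w x = 0) \<and> (\<forall>t\<in>A. sum w {s\<in>A. s \<le> t} = H t)"
  using assms(1,2)
proof (induction A rule: finite_linorder_max_induct)
  case empty
  then show ?case by (intro exI[of _ "\<lambda>_. 0"]) auto
next
  case (insert b A)
  then obtain w where w: "\<forall>x. 0 \<le> w x" "\<forall>x. x \<notin> A \<longrightarrow> w x = 0" "\<forall>t\<in>A. sum w {s\<in>A. s \<le> t} = H t"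
    by auto
  define c where "c = (if A = {} then 0 else H (Max A))"
  have bT: "b \<in> T" using insert by auto
  have c: "c \<le> H b" "sum w A = c"
  proof -
    show "c \<le> H b"
    proof (cases "A = {}")
      case False
      have "Max A \<in> A" using Max_in[OF insert(1) False] .
      then have "Max A \<in> T" "Max A \<le> b" using insert by auto
      then show ?thesis using mono[OF _ bT] False unfolding c_def by simp
    qed (simp add: c_def nonneg[OF bT])
    show "sum w A = c"
    proof (cases "A = {}")
      case False
      have "{s\<in>A. s \<le> Max A} = A" using insert False by auto
      then show ?thesis using w(3) Max_in[OF insert(1) False] False unfolding c_def by metis
    qed (simp add: c_def)
  qed
  define w' where "w' = w(b := H b - c)"
  have bA: "b \<notin> A" using insert by auto
  show ?case
  proof (intro exI[of _ w'] conjI ballI allI impI)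
    fix x show "0 \<le> w' x" using w(1) c unfolding w'_def by auto
  next
    fix x assume "x \<notin> insert b A" then show "w' x = 0" using w(2) unfolding w'_def by auto
  next
    fix t assume t: "t \<in> insert b A"
    show "sum w' {s \<in> insert b A. s \<le> t} = H t"
    proof (cases "t = b")
      case True
      have "{s \<in> insert b A. s \<le> t} = insert b A" using insert True by auto
      moreover have "sum w' A = sum w A" unfolding w'_def using bA by (intro sum.cong) auto
      ultimately show ?thesis using True c bA insert(1) by (simp add: w'_def)
    next
      case False
      then have tA: "t \<in> A" using t by auto
      then have "{s \<in> insert b A. s \<le> t} = {s\<in>A. s \<le> t}" using insert by force
      moreover have "sum w' {s\<in>A. s \<le> t} = sum w {s\<in>A. s \<le> t}" unfolding w'_def
        using bA by (intro sum.cong) auto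
      ultimately show ?thesis using w(3) tA by simp
    qed
  qed
qed

lemma pmf_exists:
  fixes H :: "'a::linorder \<Rightarrow> real"
  assumes "finite T" "T \<noteq> {}"
    and mono: "\<And>s t. s \<in> T \<Longrightarrow> t \<in> T \<Longrightarrow> s \<le> t \<Longrightarrow> H s \<le> H t"
    and nonneg: "\<And>t. t \<in> T \<Longrightarrow> 0 \<le> H t"
    and top: "H (Max T) = 1"
  shows "\<exists>p :: 'a pmf. set_pmf p \<subseteq> T \<and> (\<forall>t\<in>T. measure_pmf.prob p {x. x \<le> t} = H t)"
proof -
  have ex: "\<exists>w. (\<forall>x. 0 \<le> w x) \<and> (\<forall>x. x \<notin> T \<longrightarrow> w x = 0) \<and> (\<forall>t\<in>T. sum w {s\<in>T. s \<le> t} = H t)"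
    by (rule weights_exist[of T T H]) (use assms in auto)
  from ex obtain w where w0: "(\<forall>x. 0 \<le> w x) \<and> (\<forall>x. x \<notin> T \<longrightarrow> w x = 0) \<and> (\<forall>t\<in>T. sum w {s\<in>T. s \<le> t} = H t)"
    by (rule exE)
  note w = w0[THEN conjunct1] w0[THEN conjunct2, THEN conjunct1] w0[THEN conjunct2, THEN conjunct2]
  have sT: "sum w T = 1"
  proof -
    have "{s\<in>T. s \<le> Max T} = T" using assms by auto
    moreover have "sum w {s\<in>T. s \<le> Max T} = H (Max T)" using w(3) Max_in[OF assms(1,2)] by blast
    ultimately show ?thesis using top by simp
  qed
  have "(\<integral>\<^sup>+x. ennreal (w x) \<partial>count_space UNIV) = (\<Sum>x\<in>T. ennreal (w x))"
    by (rule nn_integral_count_space') (use assms(1) w in auto)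
  also have "\<dots> = ennreal (sum w T)" using w(1) by (simp add: sum_ennreal)
  finally have int: "(\<integral>\<^sup>+x. ennreal (w x) \<partial>count_space UNIV) = 1" using sT by simp
  define p where "p = embed_pmf w"
  have pmf: "pmf p x = w x" for x unfolding p_def by (rule pmf_embed_pmf) (use w(1) int in auto)
  have set: "set_pmf p \<subseteq> T" using w(2) by (auto simp: set_pmf_iff pmf)
  show ?thesis
  proof (intro exI[of _ p] conjI ballI set)
    fix t assume t: "t \<in> T"
    have e: "{x. x \<le> t} \<inter> T \<inter> set_pmf p = {x. x \<le> t} \<inter> set_pmf p" using set by blast
    have "measure_pmf.prob p {x. x \<le> t} = measure_pmf.prob p ({x. x \<le> t} \<inter> set_pmf p)"
      by (rule measure_Int_set_pmf[symmetric])
    also have "\<dots> = measure_pmf.prob p ({x. x \<le> t} \<inter> T \<inter> set_pmf p)" by (simp only: e)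
    also have "\<dots> = measure_pmf.prob p ({x. x \<le> t} \<inter> T)" by (rule measure_Int_set_pmf)
    also have "\<dots> = sum (pmf p) ({x. x \<le> t} \<inter> T)"
      using assms(1) by (intro measure_measure_pmf_finite) auto
    also have "\<dots> = sum w {s\<in>T. s \<le> t}" by (intro sum.cong) (auto simp: pmf)
    finally show "measure_pmf.prob p {x. x \<le> t} = H t" using w(3) t by simp
  qed
qed

lemma the_min_key:
  fixes \<kappa> :: "'a \<Rightarrow> 'b::linorder"
  assumes "finite A" "inj_on \<kappa> A" "b \<in> A" "P b"
    and R: "\<And>x y. x \<in> A \<Longrightarrow> y \<in> A \<Longrightarrow> R x y \<longleftrightarrow> \<kappa> x < \<kappa> y"
  shows "\<exists>c. c \<in> A \<and> P c \<and> (\<forall>y\<in>A. P y \<longrightarrow> \<kappa> c \<le> \<kappa> y)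
     \<and> (THE c. c \<in> A \<and> P c \<and> (\<forall>y\<in>A. P y \<longrightarrow> \<not> R y c)) = c"
proof -
  let ?B = "{x\<in>A. P x}"
  have fin: "finite (\<kappa> ` ?B)" "\<kappa> ` ?B \<noteq> {}" using assms by auto
  obtain c where c: "c \<in> ?B" "\<kappa> c = Min (\<kappa> ` ?B)" using Min_in[OF fin] by auto
  have le: "\<forall>y\<in>A. P y \<longrightarrow> \<kappa> c \<le> \<kappa> y" using c fin by auto
  have "(THE c. c \<in> A \<and> P c \<and> (\<forall>y\<in>A. P y \<longrightarrow> \<not> R y c)) = c"
  proof (rule the_equality)
    show "c \<in> A \<and> P c \<and> (\<forall>y\<in>A. P y \<longrightarrow> \<not> R y c)" using c le R by (auto simp: not_less)
  next
    fix x assume x: "x \<in> A \<and> P x \<and> (\<forall>y\<in>A. P y \<longrightarrow> \<not> R y x)"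
    then have "\<not> \<kappa> c < \<kappa> x" using c R by auto
    then have "\<kappa> x = \<kappa> c" using le x by force
    then show "x = c" using inj_onD[OF assms(2)] x c by blast
  qed
  then show ?thesis using c le by blast
qed

lemma the_max_key:
  fixes \<kappa> :: "'a \<Rightarrow> 'b::linorder"
  assumes "finite A" "inj_on \<kappa> A" "b \<in> A" "P b"
    and R: "\<And>x y. x \<in> A \<Longrightarrow> y \<in> A \<Longrightarrow> R x y \<longleftrightarrow> \<kappa> x < \<kappa> y"
  shows "\<exists>c. c \<in> A \<and> P c \<and> (\<forall>y\<in>A. P y \<longrightarrow> \<kappa> y \<le> \<kappa> c)
     \<and> (THE c. c \<in> A \<and> P c \<and> (\<forall>y\<in>A. P y \<longrightarrow> \<not> R c y)) = c"
proof -
  let ?B = "{x\<in>A. P x}"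
  have fin: "finite (\<kappa> ` ?B)" "\<kappa> ` ?B \<noteq> {}" using assms by auto
  obtain c where c: "c \<in> ?B" "\<kappa> c = Max (\<kappa> ` ?B)" using Max_in[OF fin] by auto
  have le: "\<forall>y\<in>A. P y \<longrightarrow> \<kappa> y \<le> \<kappa> c" using c fin by auto
  have "(THE c. c \<in> A \<and> P c \<and> (\<forall>y\<in>A. P y \<longrightarrow> \<not> R c y)) = c"
  proof (rule the_equality)
    show "c \<in> A \<and> P c \<and> (\<forall>y\<in>A. P y \<longrightarrow> \<not> R c y)" using c le R by (auto simp: not_less)
  next
    fix x assume x: "x \<in> A \<and> P x \<and> (\<forall>y\<in>A. P y \<longrightarrow> \<not> R x y)"
    then have "\<not> \<kappa> x < \<kappa> c" using c R by auto
    then have "\<kappa> x = \<kappa> c" using le x by force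
    then show "x = c" using inj_onD[OF assms(2)] x c by blast
  qed
  then show ?thesis using c le by blast
qed

lemma maxlist: "length x = n \<Longrightarrow> x \<le> replicate n True"
proof (induction x arbitrary: n)
  case (Cons a x)
  then show ?case by (cases n) (auto simp: less_le)
qed simp

lemma dict_less_iff: "length x = length y \<Longrightarrow> dict_less x y \<longleftrightarrow> x < y"
proof -
  have eq: "{(u,v::bool). u < v} = {(False,True)}" by auto
  show "length x = length y \<Longrightarrow> dict_less x y \<longleftrightarrow> x < y"
    unfolding dict_less_def list_less_def lexord_lex eq by simp
qed

lemma fp_set_finite: "finite (fp_set E m)"
proof -
  let ?g1 = "\<lambda>(s::real,k::nat). s * (real k / 2 ^ m) * (2::real) powi (1 - fp_bias E)"
  let ?g2 = "\<lambda>(s::real,k::nat,e::nat). s * (1 + real k / 2 ^ m) * (2::real) powi (int e - fp_bias E)"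
  have 1: "{s * (real k / 2 ^ m) * 2 powi (1 - fp_bias E) | s k. s \<in> {-1, 1} \<and> k < 2 ^ m}
     \<subseteq> ?g1 ` ({-1,1} \<times> {..<(2::nat)^m})"
  proof
    fix x assume "x \<in> {s * (real k / 2 ^ m) * 2 powi (1 - fp_bias E) | s k. s \<in> {-1, 1} \<and> k < 2 ^ m}"
    then obtain s k where sk: "x = s * (real k / 2 ^ m) * 2 powi (1 - fp_bias E)" "s \<in> {-1,1}" "k < 2^m"
      by blast
    show "x \<in> ?g1 ` ({-1,1} \<times> {..<(2::nat)^m})"
      by (rule rev_image_eqI[of "(s,k)"]) (use sk in simp_all)
  qed
  have 2: "{s * (1 + real k / 2 ^ m) * 2 powi (int e - fp_bias E) | s k e.
        s \<in> {-1, 1} \<and> k < 2 ^ m \<and> 1 \<le> e \<and> e \<le> 2 ^ E - 2}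
     \<subseteq> ?g2 ` ({-1,1} \<times> {..<(2::nat)^m} \<times> {..(2::nat)^E})"
  proof
    fix x assume "x \<in> {s * (1 + real k / 2 ^ m) * 2 powi (int e - fp_bias E) | s k e.
        s \<in> {-1, 1} \<and> k < 2 ^ m \<and> 1 \<le> e \<and> e \<le> 2 ^ E - 2}"
    then obtain s k e where sk: "x = s * (1 + real k / 2 ^ m) * 2 powi (int e - fp_bias E)"
      "s \<in> {-1,1}" "k < 2^m" "e \<le> 2 ^ E - 2"
      by blast
    show "x \<in> ?g2 ` ({-1,1} \<times> {..<(2::nat)^m} \<times> {..(2::nat)^E})"
      by (rule rev_image_eqI[of "(s,k,e)"]) (use sk in simp_all)
  qed
  have "fp_set E m \<subseteq> ?g1 ` ({-1,1} \<times> {..<(2::nat)^m}) \<union> ?g2 ` ({-1,1} \<times> {..<(2::nat)^m} \<times> {..(2::nat)^E})"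
    unfolding fp_set_def using 1 2 by blast
  then show ?thesis by (rule finite_subset) auto
qed

theorem propositionE2:
  fixes n E m :: nat
    and \<gamma> :: "bool list \<Rightarrow> xreal"
    and \<phi> :: "bool list \<Rightarrow> bool list"
    and F S :: "bool list \<Rightarrow> real"
  assumes fmt: "binary_number_format n \<gamma> \<phi>"
    and cdf: "fp_cdf E m n \<phi> F"
    and surv: "fp_survival E m n \<phi> S"
    and Sbstar: "S (bstar E m n \<phi> F) < 1/2"
  shows "(\<exists>p :: xreal pmf. set_pmf p \<subseteq> \<gamma> ` bits n \<and>
            (\<forall>t\<in>\<gamma> ` bits n. measure_pmf.prob p {x. x \<le> t} =
               (let (d, f) = Gfun E m n \<phi> F S (rfun n \<gamma> \<phi> t) in (1 - d) * f + d * (1 - f))))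
       \<and> Gfun E m n \<phi> F S ` bits n \<subseteq> {(0, f) | f. 0 \<le> f \<and> f \<le> 1/2} \<union> {(1, f) | f. 0 \<le> f \<and> f < 1/2}
       \<and> (\<forall>b\<in>bits n. \<forall>b'\<in>bits n. fst (Gfun E m n \<phi> F S b) < fst (Gfun E m n \<phi> F S b')
            \<longrightarrow> Gstar E m n \<phi> F S b < Gstar E m n \<phi> F S b')"
proof -
  define \<psi> where "\<psi> = inv_into (bits n) \<phi>"
  have bij: "bij_betw \<phi> (bits n) (bits n)" using fmt by (simp add: binary_number_format_def)
  have finB: "finite (bits n)"
    using finite_lists_length_eq[of "UNIV :: bool set" n] by (simp add: bits_def)
  have bijpsi: "bij_betw \<psi> (bits n) (bits n)" unfolding \<psi>_def by (rule bij_betw_inv_into[OF bij])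
  have psiB: "\<And>b. b \<in> bits n \<Longrightarrow> \<psi> b \<in> bits n" using bijpsi by (auto dest: bij_betwE)
  have injpsi: "inj_on \<psi> (bits n)" using bijpsi by (rule bij_betw_imp_inj_on)
  have psiphi: "\<And>x. x \<in> bits n \<Longrightarrow> \<psi> (\<phi> x) = x"
    unfolding \<psi>_def using bij by (auto intro: inv_into_f_f bij_betw_imp_inj_on)
  have phiB: "\<And>x. x \<in> bits n \<Longrightarrow> \<phi> x \<in> bits n" using bij by (auto dest: bij_betwE)
  have fl: "\<And>b b'. b \<in> bits n \<Longrightarrow> b' \<in> bits n \<Longrightarrow> fmt_less n \<phi> b b' \<longleftrightarrow> \<psi> b < \<psi> b'"
    unfolding fmt_less_def \<psi>_def[symmetric] using psiB by (simp add: dict_less_iff bits_def)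
  define tp where "tp = \<phi> (replicate n True)"
  have tpB: "tp \<in> bits n" unfolding tp_def by (intro phiB) (simp add: bits_def)
  have psitp: "\<psi> tp = replicate n True" unfolding tp_def by (intro psiphi) (simp add: bits_def)
  have psile: "\<And>b. b \<in> bits n \<Longrightarrow> \<psi> b \<le> \<psi> tp"
    unfolding psitp using psiB by (intro maxlist) (simp add: bits_def)
  have Frange: "\<And>b. b \<in> bits n \<Longrightarrow> F b \<in> fp_set E m \<and> 0 \<le> F b \<and> F b \<le> 1"
    and Ftp: "F tp = 1"
    and Fmono: "\<And>b b'. b \<in> bits n \<Longrightarrow> b' \<in> bits n \<Longrightarrow> fmt_less n \<phi> b b' \<Longrightarrow> F b \<le> F b'"
    using cdf unfolding fp_cdf_def tp_def by auto
  have Srange: "\<And>b. b \<in> bits n \<Longrightarrow> S b \<in> fp_set E m \<and> 0 \<le> S b \<and> S b \<le> 1"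
    and Stp: "S tp = 0"
    and Smono: "\<And>b b'. b \<in> bits n \<Longrightarrow> b' \<in> bits n \<Longrightarrow> fmt_less n \<phi> b b' \<Longrightarrow> S b' \<le> S b"
    using surv unfolding fp_survival_def tp_def by auto
  define sc where "sc = fp_succ E m (1/2)"
  define Y where "Y = {y \<in> fp_set E m. y > 1/2}"
  have finY: "finite Y" unfolding Y_def using fp_set_finite by auto
  have oneY: "1 \<in> Y" unfolding Y_def using Frange[OF tpB] Ftp by auto
  have scY: "sc = Min Y" unfolding sc_def fp_succ_def Y_def by simp
  have "Min Y \<in> Y" using Min_in[OF finY] oneY by auto
  then have sc_gt: "sc > 1/2" unfolding scY by (simp add: Y_def)
  have sc_le: "\<And>y. y \<in> fp_set E m \<Longrightarrow> y > 1/2 \<Longrightarrow> sc \<le> y"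
    using Min_le[OF finY] unfolding scY by (auto simp: Y_def)
  have "sc \<le> F tp" using sc_le[of 1] oneY Ftp by (auto simp: Y_def)
  then obtain bs where bs: "bs \<in> bits n" "F bs \<ge> sc" "\<forall>y\<in>bits n. F y \<ge> sc \<longrightarrow> \<psi> bs \<le> \<psi> y"
    "bstar E m n \<phi> F = bs"
    using the_min_key[OF finB injpsi tpB, of "\<lambda>b. F b \<ge> sc" "fmt_less n \<phi>"] fl
    unfolding bstar_def fmt_min_def sc_def by auto
  have Sbs: "S bs < 1/2" using Sbstar bs(4) by simp
  have G0: "\<And>b. b \<in> bits n \<Longrightarrow> \<psi> b < \<psi> bs \<Longrightarrow> Gfun E m n \<phi> F S b = (0, F b) \<and> 0 \<le> F b \<and> F b \<le> 1/2"
  proof -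
    fix b assume b: "b \<in> bits n" "\<psi> b < \<psi> bs"
    have "\<not> F b \<ge> sc" using bs(3) b by force
    then have "F b \<le> 1/2" using sc_le[of "F b"] Frange[OF b(1)] by force
    then show "Gfun E m n \<phi> F S b = (0, F b) \<and> 0 \<le> F b \<and> F b \<le> 1/2"
      using b Frange[OF b(1)] fl[OF b(1) bs(1)] bs(4) by (simp add: Gfun_def)
  qed
  have G1: "\<And>b. b \<in> bits n \<Longrightarrow> \<not> \<psi> b < \<psi> bs \<Longrightarrow> Gfun E m n \<phi> F S b = (1, S b) \<and> 0 \<le> S b \<and> S b < 1/2"
  proof -
    fix b assume b: "b \<in> bits n" "\<not> \<psi> b < \<psi> bs"
    have "S b \<le> S bs"
    proof (cases "b = bs")
      case False
      then have "\<psi> b \<noteq> \<psi> bs" using injpsi b bs by (auto dest: inj_onD)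
      then have "fmt_less n \<phi> bs b" using fl[OF bs(1) b(1)] b by auto
      then show ?thesis using Smono[OF bs(1) b(1)] by simp
    qed simp
    then show "Gfun E m n \<phi> F S b = (1, S b) \<and> 0 \<le> S b \<and> S b < 1/2"
      using b Srange[OF b(1)] fl[OF b(1) bs(1)] bs(4) Sbs by (simp add: Gfun_def)
  qed
  have Gs: "\<And>b. b \<in> bits n \<Longrightarrow> Gstar E m n \<phi> F S b = (if \<psi> b < \<psi> bs then F b else 1 - S b)"
    using G0 G1 by (auto simp: Gstar_def)
  have part2: "Gfun E m n \<phi> F S ` bits n \<subseteq> {(0, f) | f. 0 \<le> f \<and> f \<le> 1/2} \<union> {(1, f) | f. 0 \<le> f \<and> f < 1/2}"
  proof
    fix x assume "x \<in> Gfun E m n \<phi> F S ` bits n"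
    then obtain b where b: "b \<in> bits n" "x = Gfun E m n \<phi> F S b" by auto
    show "x \<in> {(0, f) | f. 0 \<le> f \<and> f \<le> 1/2} \<union> {(1, f) | f. 0 \<le> f \<and> f < 1/2}"
      using G0[OF b(1)] G1[OF b(1)] b(2) by (cases "\<psi> b < \<psi> bs") auto
  qed
  have part3: "\<forall>b\<in>bits n. \<forall>b'\<in>bits n. fst (Gfun E m n \<phi> F S b) < fst (Gfun E m n \<phi> F S b')
            \<longrightarrow> Gstar E m n \<phi> F S b < Gstar E m n \<phi> F S b'"
  proof (intro ballI impI)
    fix b b' assume b: "b \<in> bits n" "b' \<in> bits n"
      and lt: "fst (Gfun E m n \<phi> F S b) < fst (Gfun E m n \<phi> F S b')"
    have "\<psi> b < \<psi> bs" "\<not> \<psi> b' < \<psi> bs"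
      using lt G0 G1 b by (cases "\<psi> b < \<psi> bs"; cases "\<psi> b' < \<psi> bs"; auto)+
    then show "Gstar E m n \<phi> F S b < Gstar E m n \<phi> F S b'"
      using Gs[OF b(1)] Gs[OF b(2)] G0[OF b(1)] G1[OF b(2)] by simp
  qed
  have Gsmono: "\<And>b b'. b \<in> bits n \<Longrightarrow> b' \<in> bits n \<Longrightarrow> \<psi> b \<le> \<psi> b' \<Longrightarrow>
      Gstar E m n \<phi> F S b \<le> Gstar E m n \<phi> F S b'"
  proof -
    fix b b' assume b: "b \<in> bits n" "b' \<in> bits n" "\<psi> b \<le> \<psi> b'"
    show "Gstar E m n \<phi> F S b \<le> Gstar E m n \<phi> F S b'"
    proof (cases "b = b'")
      case False
      then have "\<psi> b < \<psi> b'" using b injpsi by (auto dest: inj_onD simp: less_le)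
      then have fb: "fmt_less n \<phi> b b'" using fl b by auto
      show ?thesis using Gs[OF b(1)] Gs[OF b(2)] G0[OF b(1)] G1[OF b(1)] G0[OF b(2)] G1[OF b(2)] Fmono[OF b(1,2) fb] Smono[OF b(1,2) fb]
        \<open>\<psi> b < \<psi> b'\<close> by (auto split: if_splits)
    qed simp
  qed
  have Gsnn: "\<And>b. b \<in> bits n \<Longrightarrow> 0 \<le> Gstar E m n \<phi> F S b"
    using Gs G0 G1 by fastforce
  define T where "T = \<gamma> ` bits n"
  define H where "H t = Gstar E m n \<phi> F S (rfun n \<gamma> \<phi> t)" for t
  have rf: "\<And>t. t \<in> T \<Longrightarrow> rfun n \<gamma> \<phi> t \<in> bits n \<and> \<gamma> (rfun n \<gamma> \<phi> t) \<le> t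
      \<and> (\<forall>y\<in>bits n. \<gamma> y \<le> t \<longrightarrow> \<psi> y \<le> \<psi> (rfun n \<gamma> \<phi> t))"
  proof -
    fix t assume "t \<in> T"
    then obtain b0 where b0: "b0 \<in> bits n" "\<gamma> b0 \<le> t" unfolding T_def by auto
    show "rfun n \<gamma> \<phi> t \<in> bits n \<and> \<gamma> (rfun n \<gamma> \<phi> t) \<le> t
      \<and> (\<forall>y\<in>bits n. \<gamma> y \<le> t \<longrightarrow> \<psi> y \<le> \<psi> (rfun n \<gamma> \<phi> t))"
      using the_max_key[OF finB injpsi b0(1), of "\<lambda>b. \<gamma> b \<le> t" "fmt_less n \<phi>"] fl b0(2)
      unfolding rfun_def fmt_max_def by auto
  qed
  have finT: "finite T" "T \<noteq> {}" unfolding T_def using finB tpB by auto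
  have Hmono: "\<And>s t. s \<in> T \<Longrightarrow> t \<in> T \<Longrightarrow> s \<le> t \<Longrightarrow> H s \<le> H t"
    unfolding H_def using rf by (metis Gsmono order_trans)
  have Hnn: "\<And>t. t \<in> T \<Longrightarrow> 0 \<le> H t" unfolding H_def using rf Gsnn by blast
  have "rfun n \<gamma> \<phi> (Max T) = tp"
  proof -
    have MT: "Max T \<in> T" using Min_in finT Max_in by blast
    have "\<gamma> tp \<le> Max T" using finT tpB unfolding T_def by auto
    then have "\<psi> tp \<le> \<psi> (rfun n \<gamma> \<phi> (Max T))" using rf[OF MT] tpB by blast
    then have "\<psi> tp = \<psi> (rfun n \<gamma> \<phi> (Max T))" using psile rf[OF MT] by (meson order_antisym)
    then show ?thesis using injpsi rf[OF MT] tpB by (auto dest: inj_onD)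
  qed
  moreover have "\<not> \<psi> tp < \<psi> bs" using psile bs(1) by (simp add: not_less)
  ultimately have Htop: "H (Max T) = 1" unfolding H_def using Gs[OF tpB] Stp by simp
  obtain p :: "xreal pmf" where p: "set_pmf p \<subseteq> T" "\<forall>t\<in>T. measure_pmf.prob p {x. x \<le> t} = H t"
    using pmf_exists[of T H, OF finT Hmono Hnn Htop] by blast
  have part1: "\<exists>p :: xreal pmf. set_pmf p \<subseteq> \<gamma> ` bits n \<and>
            (\<forall>t\<in>\<gamma> ` bits n. measure_pmf.prob p {x. x \<le> t} =
               (let (d, f) = Gfun E m n \<phi> F S (rfun n \<gamma> \<phi> t) in (1 - d) * f + d * (1 - f)))"
    using p unfolding Gstar_def[symmetric] H_def T_def by blast
  show ?thesis using part1 part2 part3 by blast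
qed

end
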